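(* Let $k, q \in \mathbb N$ with $k \ge 2$, and let $\phi \colon \mathcal H_{2k}^0 \to M_{2q}$ be a real linear map such that $\phi(\mathcal{IH}_{2k}^0) \subset \mathcal U_{2q}$ and there exist $U, V \in \mathcal U_{2q}$ with $$\phi(A \oplus B) = U(B \otimes I_q)V \quad \text{for all } A \in \mathcal H_{2(k-1)}^0,\ B \in \mathcal H_2^0.$$ Then there exists a real linear map $\psi \colon M_{2(k-1)} \to \mathcal H_q$ such that $\psi(\mathcal U_{2(k-1)}) \subset \mathcal H_q\cap\mathcal U_q$.
   Context: $M_n$ is the set of $n\times n$ complex matrices, $\mathcal U_n$ the unitary ones, $\mathcal H_n$ the hermitian ones, $\mathcal H_n^0$ the trace-zero hermitian ones, $\mathcal{IH}_n^0=\mathcal H_n^0\cap\mathcal U_n$; $\oplus$ is block-diagonal sum and $\otimes$ the Kronecker product. *)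

theory Defs
  imports Complex_Main "Jordan_Normal_Form.Matrix"
begin

definition adj :: "complex mat \<Rightarrow> complex mat" where
  "adj A = mat (dim_col A) (dim_row A) (\<lambda>(i,j). cnj (A $$ (j,i)))"

definition mtrace :: "complex mat \<Rightarrow> complex" where
  "mtrace A = (\<Sum>i<dim_row A. A $$ (i,i))"

abbreviation Mn :: "nat \<Rightarrow> complex mat set" where
  "Mn n \<equiv> carrier_mat n n"

definition Unit :: "nat \<Rightarrow> complex mat set" where
  "Unit n = {U \<in> carrier_mat n n. adj U * U = 1\<^sub>m n}"

definition Herm :: "nat \<Rightarrow> complex mat set" where
  "Herm n = {A \<in> carrier_mat n n. adj A = A}"

definition Herm0 :: "nat \<Rightarrow> complex mat set" where
  "Herm0 n = {A \<in> Herm n. mtrace A = 0}"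

definition IHerm0 :: "nat \<Rightarrow> complex mat set" where
  "IHerm0 n = Herm0 n \<inter> Unit n"

definition dsum :: "complex mat \<Rightarrow> complex mat \<Rightarrow> complex mat" where
  "dsum A B = four_block_mat A (0\<^sub>m (dim_row A) (dim_col B)) (0\<^sub>m (dim_row B) (dim_col A)) B"

definition kron :: "complex mat \<Rightarrow> complex mat \<Rightarrow> complex mat" where
  "kron A B = mat (dim_row A * dim_row B) (dim_col A * dim_col B)
     (\<lambda>(i,j). A $$ (i div dim_row B, j div dim_col B) * B $$ (i mod dim_row B, j mod dim_col B))"

definition real_linear_on :: "complex mat set \<Rightarrow> (complex mat \<Rightarrow> complex mat) \<Rightarrow> bool" where
  "real_linear_on S f \<longleftrightarrow> (\<forall>X\<in>S. \<forall>Y\<in>S. \<forall>a b :: real.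
      f (complex_of_real a \<cdot>\<^sub>m X + complex_of_real b \<cdot>\<^sub>m Y)
        = complex_of_real a \<cdot>\<^sub>m f X + complex_of_real b \<cdot>\<^sub>m f Y)"

end

theory Submission
  imports Defs "Jordan_Normal_Form.Determinant"
begin

lemma adj_dim[simp]: "dim_row (adj A) = dim_col A" "dim_col (adj A) = dim_row A"
  unfolding adj_def by simp_all
lemma adj_index[simp]: "i < dim_col A \<Longrightarrow> j < dim_row A \<Longrightarrow> adj A $$ (i,j) = cnj (A $$ (j,i))"
  unfolding adj_def by simp
lemma adj_carrier[simp]: "A \<in> carrier_mat nr nc \<Longrightarrow> adj A \<in> carrier_mat nc nr"
  unfolding carrier_mat_def by simp
lemma adj_adj[simp]: "adj (adj A) = A" by (rule eq_matI) auto
lemma adj_mult: assumes "A \<in> carrier_mat nr n" "B \<in> carrier_mat n nc"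
  shows "adj (A*B) = adj B * adj A"
  by (rule eq_matI) (use assms in \<open>auto simp: scalar_prod_def intro!: sum.cong\<close>)
lemma adj_add: "A \<in> carrier_mat nr nc \<Longrightarrow> B \<in> carrier_mat nr nc \<Longrightarrow> adj (A+B) = adj A + adj B"
  by (rule eq_matI) auto
lemma adj_smult: "adj (c \<cdot>\<^sub>m A) = cnj c \<cdot>\<^sub>m adj A"
  by (rule eq_matI) auto
lemma adj_uminus: "adj (- A) = - adj A"
  by (rule eq_matI) auto
lemma adj_zero[simp]: "adj (0\<^sub>m a b) = 0\<^sub>m b a"
  by (rule eq_matI) auto
lemma adj_one[simp]: "adj (1\<^sub>m a) = 1\<^sub>m a"
  by (rule eq_matI) auto
lemma adj_four_block: assumes "A \<in> carrier_mat nr1 nc1" "B \<in> carrier_mat nr1 nc2"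
  "C \<in> carrier_mat nr2 nc1" "D \<in> carrier_mat nr2 nc2"
  shows "adj (four_block_mat A B C D) = four_block_mat (adj A) (adj C) (adj B) (adj D)"
  by (rule eq_matI) (use assms in auto)

lemma mtrace_mult_comm: assumes "A \<in> carrier_mat n m" "B \<in> carrier_mat m n"
  shows "mtrace (A*B) = mtrace (B*A)"
proof -
  have "mtrace (A*B) = (\<Sum>i<n. \<Sum>k<m. A $$ (i,k) * B $$ (k,i))"
    using assms by (auto simp: mtrace_def scalar_prod_def lessThan_atLeast0 intro!: sum.cong)
  also have "\<dots> = (\<Sum>k<m. \<Sum>i<n. B $$ (k,i) * A $$ (i,k))"
    by (subst sum.swap) (simp add: mult.commute)
  also have "\<dots> = mtrace (B*A)"
    using assms by (auto simp: mtrace_def scalar_prod_def lessThan_atLeast0 intro!: sum.cong)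
  finally show ?thesis .
qed

lemma mtrace_four_block: assumes "A \<in> carrier_mat n1 n1" "D \<in> carrier_mat n2 n2"
  shows "mtrace (four_block_mat A B C D) = mtrace A + mtrace D"
proof -
  have "mtrace (four_block_mat A B C D) = (\<Sum>i\<in>{0..<n1+n2}. four_block_mat A B C D $$ (i,i))"
    using assms by (simp add: mtrace_def lessThan_atLeast0)
  also have "\<dots> = (\<Sum>i\<in>{0..<n1}. four_block_mat A B C D $$ (i,i)) + (\<Sum>i\<in>{n1..<n1+n2}. four_block_mat A B C D $$ (i,i))"
    by (rule sum.atLeastLessThan_concat[symmetric]) auto
  also have "(\<Sum>i\<in>{0..<n1}. four_block_mat A B C D $$ (i,i)) = mtrace A"
    using assms by (auto simp: mtrace_def lessThan_atLeast0 intro!: sum.cong)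
  also have "(\<Sum>i\<in>{n1..<n1+n2}. four_block_mat A B C D $$ (i,i)) = (\<Sum>i\<in>{0..<n2}. four_block_mat A B C D $$ (i+n1,i+n1))"
    using sum.shift_bounds_nat_ivl[of "\<lambda>i. four_block_mat A B C D $$ (i,i)" 0 n1 n2] by (simp add: add.commute)
  also have "\<dots> = mtrace D"
    using assms by (auto simp: mtrace_def lessThan_atLeast0 intro!: sum.cong)
  finally show ?thesis .
qed

lemma mtrace_add: "A \<in> carrier_mat n n \<Longrightarrow> B \<in> carrier_mat n n \<Longrightarrow> mtrace (A + B) = mtrace A + mtrace B"
  by (auto simp: mtrace_def sum.distrib)
lemma mtrace_smult: "A \<in> carrier_mat n n \<Longrightarrow> mtrace (c \<cdot>\<^sub>m A) = c * mtrace A"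
  unfolding mtrace_def by (simp add: sum_distrib_left)
lemma mtrace_zero[simp]: "mtrace (0\<^sub>m n n) = 0"
  by (auto simp: mtrace_def)

lemma unit_right: assumes "U \<in> Unit n" shows "U * adj U = 1\<^sub>m n"
  using assms mat_mult_left_right_inverse[of "adj U" n U] by (auto simp: Unit_def)
lemma unit_left: assumes "U \<in> Unit n" shows "adj U * U = 1\<^sub>m n"
  using assms by (auto simp: Unit_def)
lemma unit_carrier: "U \<in> Unit n \<Longrightarrow> U \<in> carrier_mat n n" by (auto simp: Unit_def)


lemma massoc: "dim_col A = dim_row B \<Longrightarrow> dim_col B = dim_row C \<Longrightarrow> A * B * C = A * (B * C)"
  by (rule assoc_mult_mat[of A "dim_row A" "dim_col A" B "dim_col B" C "dim_col C"]) auto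

lemma unit_cancel1: assumes "U \<in> Unit n" "Y \<in> carrier_mat n m" shows "adj U * (U * Y) = Y"
proof -
  have U: "U \<in> carrier_mat n n" using assms unit_carrier by auto
  have "adj U * (U * Y) = (adj U * U) * Y" using U assms by (simp add: massoc)
  thus ?thesis using unit_left[OF assms(1)] assms by simp
qed
lemma unit_cancel2: assumes "U \<in> Unit n" "Y \<in> carrier_mat n m" shows "U * (adj U * Y) = Y"
proof -
  have U: "U \<in> carrier_mat n n" using assms unit_carrier by auto
  have "U * (adj U * Y) = (U * adj U) * Y" using U assms by (simp add: massoc)
  thus ?thesis using unit_right[OF assms(1)] assms by simp
qed

lemma herm_carrier: "X \<in> Herm n \<Longrightarrow> X \<in> carrier_mat n n" by (auto simp: Herm_def)
lemma herm_adj: "X \<in> Herm n \<Longrightarrow> adj X = X" by (auto simp: Herm_def)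

lemma conj_herm: assumes G: "G \<in> carrier_mat n n" and X: "X \<in> Herm n"
  shows "G * X * adj G \<in> Herm n"
proof -
  have Xc: "X \<in> carrier_mat n n" and Xa: "adj X = X" using X by (auto simp: Herm_def)
  have "adj (G * X * adj G) = adj (adj G) * adj (G * X)"
    by (rule adj_mult[of _ n n _ n]) (use G Xc in auto)
  also have "adj (G * X) = adj X * adj G" by (rule adj_mult[of _ n n _ n]) (use G Xc in auto)
  finally have "adj (G * X * adj G) = G * (X * adj G)" using Xa by simp
  also have "\<dots> = G * X * adj G" using G Xc by (simp add: massoc)
  finally show ?thesis using G Xc by (auto simp: Herm_def)
qed

lemma conj_Herm0: assumes G: "G \<in> Unit n" and X: "X \<in> Herm0 n"
  shows "G * X * adj G \<in> Herm0 n"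
proof -
  have Gc: "G \<in> carrier_mat n n" using G unit_carrier by auto
  have Xc: "X \<in> carrier_mat n n" using X by (auto simp: Herm0_def Herm_def)
  have "mtrace (G * X * adj G) = mtrace (G * (X * adj G))" using Gc Xc by (simp add: massoc)
  also have "\<dots> = mtrace ((X * adj G) * G)" by (rule mtrace_mult_comm[of _ n n]) (use Gc Xc in auto)
  also have "\<dots> = mtrace X" using Gc Xc unit_left[OF G] by (simp add: massoc)
  finally show ?thesis using conj_herm[OF Gc] X by (auto simp: Herm0_def)
qed

lemma conj_IHerm0: assumes G: "G \<in> Unit n" and X: "X \<in> IHerm0 n"
  shows "G * X * adj G \<in> IHerm0 n"
proof -
  have Gc: "G \<in> carrier_mat n n" using G unit_carrier by auto
  have Xc: "X \<in> carrier_mat n n" using X by (auto simp: IHerm0_def Herm0_def Herm_def)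
  have Xa: "adj X = X" using X by (auto simp: IHerm0_def Herm0_def Herm_def)
  have XU: "X * X = 1\<^sub>m n" using X Xa by (auto simp: IHerm0_def Unit_def)
  have H: "G * X * adj G \<in> Herm0 n" using conj_Herm0[OF G] X by (auto simp: IHerm0_def)
  hence Ha: "adj (G * X * adj G) = G * X * adj G" by (auto simp: Herm0_def Herm_def)
  have "adj (G * X * adj G) * (G * X * adj G) = G * (X * (adj G * (G * (X * adj G))))"
    unfolding Ha using Gc Xc by (simp add: massoc)
  also have "\<dots> = G * (X * (X * adj G))" using unit_cancel1[OF G, of "X * adj G" n] Gc Xc by simp
  also have "\<dots> = G * adj G" using XU Gc Xc by (simp flip: massoc)
  also have "\<dots> = 1\<^sub>m n" using unit_right[OF G] .
  finally show ?thesis using H Gc Xc by (auto simp: IHerm0_def Unit_def)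
qed

lemma smult_smult_mat: "a \<cdot>\<^sub>m (b \<cdot>\<^sub>m A) = (a * b) \<cdot>\<^sub>m (A :: complex mat)"
  by (rule eq_matI) auto

definition c2 :: complex where "c2 = complex_of_real (1 / sqrt 2)"
lemma c2_sq: "c2 * c2 = 1/2"
  unfolding c2_def by (simp flip: of_real_mult)
lemma cnj_c2[simp]: "cnj c2 = c2" unfolding c2_def by simp

lemma half_sum_IH: assumes H: "H \<in> IHerm0 N" and X: "X \<in> IHerm0 N"
  and AC: "H * X + X * H = 0\<^sub>m N N"
  shows "c2 \<cdot>\<^sub>m H + c2 \<cdot>\<^sub>m X \<in> IHerm0 N"
proof -
  have Hc: "H \<in> carrier_mat N N" and Ha: "adj H = H" and Ht: "mtrace H = 0" and HU: "H * H = 1\<^sub>m N"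
    using H by (auto simp: IHerm0_def Herm0_def Herm_def Unit_def)
  have Xc: "X \<in> carrier_mat N N" and Xa: "adj X = X" and Xt: "mtrace X = 0" and XU: "X * X = 1\<^sub>m N"
    using X by (auto simp: IHerm0_def Herm0_def Herm_def Unit_def)
  define S where "S = c2 \<cdot>\<^sub>m H + c2 \<cdot>\<^sub>m X"
  have Sc: "S \<in> carrier_mat N N" using Hc Xc by (simp add: S_def)
  have Sa: "adj S = S" unfolding S_def
    using Hc Xc Ha Xa by (simp add: adj_add[of _ N N] adj_smult)
  have St: "mtrace S = 0" unfolding S_def using Hc Xc Ht Xt by (simp add: mtrace_add[of _ N] mtrace_smult[of _ N])
  have S2: "S = c2 \<cdot>\<^sub>m (H + X)" unfolding S_def using Hc Xc by (simp add: add_smult_distrib_left_mat)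
  have "S * S = (c2 * c2) \<cdot>\<^sub>m ((H + X) * (H + X))" unfolding S2
    using Hc Xc by (simp add: mult_smult_distrib[of _ N N _ N] mult_smult_assoc_mat[of _ N N _ N] smult_smult_mat)
  also have "(H + X) * (H + X) = (H * H + X * H) + (H * X + X * X)"
    using Hc Xc by (simp add: add_mult_distrib_mat[of _ N N] mult_add_distrib_mat[of _ N N])
  finally have SS: "S * S = (c2 * c2) \<cdot>\<^sub>m ((1\<^sub>m N + X * H) + (H * X + 1\<^sub>m N))" using HU XU by simp
  have "S * S = 1\<^sub>m N"
  proof (rule eq_matI)
    fix i j assume ij: "i < dim_row (1\<^sub>m N :: complex mat)" "j < dim_col (1\<^sub>m N :: complex mat)"
    have e: "(H * X) $$ (i,j) + (X * H) $$ (i,j) = 0"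
      using arg_cong[OF AC, of "\<lambda>M. M $$ (i,j)"] ij Hc Xc by simp
    have "(S * S) $$ (i,j) = c2 * c2 * ((1\<^sub>m N $$ (i,j) + (X * H) $$ (i,j)) + ((H * X) $$ (i,j) + 1\<^sub>m N $$ (i,j)))"
      unfolding SS using ij Hc Xc by simp
    also have "\<dots> = c2 * c2 * (2 * 1\<^sub>m N $$ (i,j) + ((H * X) $$ (i,j) + (X * H) $$ (i,j)))"
      by (simp add: algebra_simps)
    also have "\<dots> = 1\<^sub>m N $$ (i,j)" unfolding e c2_sq by simp
    finally show "(S * S) $$ (i,j) = 1\<^sub>m N $$ (i,j)" .
  qed (use Sc in auto)
  thus ?thesis using Sc Sa St unfolding S_def[symmetric] by (auto simp: IHerm0_def Herm0_def Herm_def Unit_def)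
qed


lemma unit_sum_cons: assumes P: "P \<in> Unit N" and M: "M \<in> Unit N"
  and S: "c2 \<cdot>\<^sub>m P + c2 \<cdot>\<^sub>m M \<in> Unit N"
  shows "adj P * M + adj M * P = 0\<^sub>m N N"
proof -
  have Pc: "P \<in> carrier_mat N N" and PU: "adj P * P = 1\<^sub>m N" using P by (auto simp: Unit_def)
  have Mc: "M \<in> carrier_mat N N" and MU: "adj M * M = 1\<^sub>m N" using M by (auto simp: Unit_def)
  define S where "S = c2 \<cdot>\<^sub>m P + c2 \<cdot>\<^sub>m M"
  have S2: "S = c2 \<cdot>\<^sub>m (P + M)" unfolding S_def using Pc Mc by (simp add: add_smult_distrib_left_mat)
  have Sa: "adj S = c2 \<cdot>\<^sub>m (adj P + adj M)" unfolding S2 using Pc Mc by (simp add: adj_add[of _ N N] adj_smult)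
  have SU: "adj S * S = 1\<^sub>m N" using S unfolding S_def[symmetric] by (auto simp: Unit_def)
  have "adj S * S = (c2 \<cdot>\<^sub>m (adj P + adj M)) * (c2 \<cdot>\<^sub>m (P + M))" by (metis Sa S2)
  also have "\<dots> = (c2 * c2) \<cdot>\<^sub>m ((adj P + adj M) * (P + M))"
    using Pc Mc by (simp add: mult_smult_distrib[of _ N N _ N] mult_smult_assoc_mat[of _ N N _ N] smult_smult_mat)
  also have "(adj P + adj M) * (P + M) = (adj P * P + adj M * P) + (adj P * M + adj M * M)"
    using Pc Mc by (simp add: add_mult_distrib_mat[of _ N N] mult_add_distrib_mat[of _ N N])
  finally have SS: "adj S * S = (c2 * c2) \<cdot>\<^sub>m ((1\<^sub>m N + adj M * P) + (adj P * M + 1\<^sub>m N))" using PU MU by simp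
  show ?thesis
  proof (rule eq_matI)
    fix i j assume ij: "i < dim_row (0\<^sub>m N N :: complex mat)" "j < dim_col (0\<^sub>m N N :: complex mat)"
    have e: "(adj S * S) $$ (i,j) = 1\<^sub>m N $$ (i,j)" using SU by simp
    have "(adj S * S) $$ (i,j) = c2 * c2 * ((1\<^sub>m N $$ (i,j) + (adj M * P) $$ (i,j)) + ((adj P * M) $$ (i,j) + 1\<^sub>m N $$ (i,j)))"
      unfolding SS using ij Pc Mc by simp
    also have "\<dots> = c2 * c2 * (2 * 1\<^sub>m N $$ (i,j)) + c2 * c2 * ((adj P * M) $$ (i,j) + (adj M * P) $$ (i,j))"
      by (simp add: algebra_simps)
    also have "\<dots> = 1\<^sub>m N $$ (i,j) + ((adj P * M) $$ (i,j) + (adj M * P) $$ (i,j)) / 2" unfolding c2_sq by simp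
    finally have "((adj P * M) $$ (i,j) + (adj M * P) $$ (i,j)) / 2 = 0" using e by simp
    thus "(adj P * M + adj M * P) $$ (i,j) = 0\<^sub>m N N $$ (i,j)" using ij Pc Mc by simp
  qed (use Pc Mc in auto)
qed

lemma mult_fb: assumes "A1 \<in> carrier_mat a b" "B1 \<in> carrier_mat a c" "C1 \<in> carrier_mat d b" "D1 \<in> carrier_mat d c"
  "A2 \<in> carrier_mat b e" "B2 \<in> carrier_mat b f" "C2 \<in> carrier_mat c e" "D2 \<in> carrier_mat c f"
  shows "four_block_mat A1 B1 C1 D1 * four_block_mat A2 B2 C2 D2
  = four_block_mat (A1 * A2 + B1 * C2) (A1 * B2 + B1 * D2) (C1 * A2 + D1 * C2) (C1 * B2 + D1 * D2)"
  by (rule mult_four_block_mat[OF assms])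
lemma add_fb: assumes "A1 \<in> carrier_mat a b" "B1 \<in> carrier_mat a c" "C1 \<in> carrier_mat d b" "D1 \<in> carrier_mat d c"
  "A2 \<in> carrier_mat a b" "B2 \<in> carrier_mat a c" "C2 \<in> carrier_mat d b" "D2 \<in> carrier_mat d c"
  shows "four_block_mat A1 B1 C1 D1 + four_block_mat A2 B2 C2 D2
  = four_block_mat (A1 + A2) (B1 + B2) (C1 + C2) (D1 + D2)"
  by (rule add_four_block_mat[OF assms])

lemma dsum_fb: "A \<in> carrier_mat n1 n1 \<Longrightarrow> B \<in> carrier_mat n2 n2 \<Longrightarrow>
  dsum A B = four_block_mat A (0\<^sub>m n1 n2) (0\<^sub>m n2 n1) B"
  unfolding dsum_def by simp

lemma IH_D: assumes "X \<in> IHerm0 n" shows "X \<in> carrier_mat n n" "adj X = X" "mtrace X = 0" "adj X * X = 1\<^sub>m n"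
  using assms by (auto simp: IHerm0_def Herm0_def Herm_def Unit_def)
lemma IH_I: assumes "X \<in> carrier_mat n n" "adj X = X" "mtrace X = 0" "adj X * X = 1\<^sub>m n" shows "X \<in> IHerm0 n"
  using assms by (auto simp: IHerm0_def Herm0_def Herm_def Unit_def)
lemma H0_D: assumes "X \<in> Herm0 n" shows "X \<in> carrier_mat n n" "adj X = X" "mtrace X = 0"
  using assms by (auto simp: Herm0_def Herm_def)
lemma H0_I: assumes "X \<in> carrier_mat n n" "adj X = X" "mtrace X = 0" shows "X \<in> Herm0 n"
  using assms by (auto simp: Herm0_def Herm_def)

lemma dsum_IHerm0: assumes A: "A \<in> IHerm0 n1" and B: "B \<in> IHerm0 n2"
  shows "dsum A B \<in> IHerm0 (n1 + n2)"
proof -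
  note a = IH_D[OF A] and b = IH_D[OF B]
  have eq: "dsum A B = four_block_mat A (0\<^sub>m n1 n2) (0\<^sub>m n2 n1) B" using dsum_fb a(1) b(1) .
  have ad: "adj (dsum A B) = dsum A B" unfolding eq using a b by (simp add: adj_four_block[of _ n1 n1 _ n2 _ n2])
  have tr: "mtrace (dsum A B) = 0" unfolding eq using a b by (simp add: mtrace_four_block)
  have "adj (dsum A B) * dsum A B = four_block_mat (adj A * A) (0\<^sub>m n1 n2) (0\<^sub>m n2 n1) (adj B * B)"
    unfolding ad unfolding eq using a b
    by (simp add: mult_fb[where a=n1 and b=n1 and c=n2 and d=n2 and e=n1 and f=n2] carrier_matD)
  also have "\<dots> = 1\<^sub>m (n1 + n2)" using a b by simp
  finally show ?thesis using ad tr eq a b by (intro IH_I) auto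
qed

lemma dsum_Herm0: assumes A: "A \<in> Herm0 n1" and B: "B \<in> Herm0 n2"
  shows "dsum A B \<in> Herm0 (n1 + n2)"
proof -
  note a = H0_D[OF A] and b = H0_D[OF B]
  have eq: "dsum A B = four_block_mat A (0\<^sub>m n1 n2) (0\<^sub>m n2 n1) B" using dsum_fb a(1) b(1) .
  have ad: "adj (dsum A B) = dsum A B" unfolding eq using a b by (simp add: adj_four_block[of _ n1 n1 _ n2 _ n2])
  have tr: "mtrace (dsum A B) = 0" unfolding eq using a b by (simp add: mtrace_four_block)
  show ?thesis using ad tr eq a b by (intro H0_I) auto
qed


lemma adj_fb: assumes "A \<in> carrier_mat a b" "B \<in> carrier_mat a c" "C \<in> carrier_mat d b" "D \<in> carrier_mat d c"
  shows "adj (four_block_mat A B C D) = four_block_mat (adj A) (adj C) (adj B) (adj D)"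
  by (rule adj_four_block[OF assms])

lemma add_zero_right'[simp]: "dim_row A = a \<Longrightarrow> dim_col A = b \<Longrightarrow> A + 0\<^sub>m a b = (A :: complex mat)"
  by (rule eq_matI) auto
lemma add_zero_left'[simp]: "dim_row A = a \<Longrightarrow> dim_col A = b \<Longrightarrow> 0\<^sub>m a b + A = (A :: complex mat)"
  by (rule eq_matI) auto

lemma uminus_l_inv'[simp]: "- A + A = 0\<^sub>m (dim_row A) (dim_col A :: nat) \<and> A + - A = (0\<^sub>m (dim_row A) (dim_col A) :: complex mat)"
  by (intro conjI; rule eq_matI) simp_all

lemma uminus_r_inv_mat': "(A :: complex mat) \<in> carrier_mat a b \<Longrightarrow> A + - A = 0\<^sub>m a b"
  by (rule eq_matI) auto

lemma X0_IH: assumes D: "D \<in> Herm n" "mtrace D = 0" and E: "E \<in> carrier_mat n p"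
  and DE1: "D * D + E * adj E = 1\<^sub>m n" and DE: "D * E = 0\<^sub>m n p" and EE: "adj E * E = 1\<^sub>m p"
  shows "four_block_mat D E (adj E) (0\<^sub>m p p) \<in> IHerm0 (n + p)"
proof -
  have Dc: "D \<in> carrier_mat n n" and Da: "adj D = D" using D by (auto simp: Herm_def)
  define X where "X = four_block_mat D E (adj E) (0\<^sub>m p p)"
  have ad: "adj X = X" unfolding X_def using Dc E Da by (simp add: adj_fb[where a=n and b=n and c=p and d=p])
  have tr: "mtrace X = 0" unfolding X_def using Dc E D(2) by (simp add: mtrace_four_block[of D n "0\<^sub>m p p" p])
  have ED: "adj E * D = 0\<^sub>m p n" using adj_mult[of D n n E p] Dc E Da DE by simp
  have "adj X * X = X * X" using ad by simp
  also have "\<dots> = four_block_mat (D * D + E * adj E) (D * E + E * 0\<^sub>m p p) (adj E * D + 0\<^sub>m p p * adj E) (adj E * E + 0\<^sub>m p p * 0\<^sub>m p p)"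
    unfolding X_def using Dc E by (simp add: mult_fb[where a=n and b=n and c=p and d=p and e=n and f=p])
  also have "\<dots> = 1\<^sub>m (n + p)" unfolding DE1 DE ED EE using E by (simp add: carrier_matD)
  finally show ?thesis unfolding X_def[symmetric] using ad tr Dc E by (intro IH_I) (auto simp: X_def)
qed

lemma anticomm_block: assumes A0: "A0 \<in> carrier_mat n n" "adj A0 = A0" and B: "B \<in> carrier_mat p p" "adj B = B"
  and D: "D \<in> carrier_mat n n" and E: "E \<in> carrier_mat n p"
  and AD: "A0 * D + D * A0 = 0\<^sub>m n n" and AE: "A0 * E + E * B = 0\<^sub>m n p"
  shows "dsum A0 B * four_block_mat D E (adj E) (0\<^sub>m p p) + four_block_mat D E (adj E) (0\<^sub>m p p) * dsum A0 B = 0\<^sub>m (n + p) (n + p)"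
proof -
  have H: "dsum A0 B = four_block_mat A0 (0\<^sub>m n p) (0\<^sub>m p n) B" using dsum_fb A0(1) B(1) .
  have 1: "dsum A0 B * four_block_mat D E (adj E) (0\<^sub>m p p) = four_block_mat (A0 * D) (A0 * E) (B * adj E) (0\<^sub>m p p)"
    unfolding H using A0 B D E by (simp add: mult_fb[where a=n and b=n and c=p and d=p and e=n and f=p] carrier_matD)
  have 2: "four_block_mat D E (adj E) (0\<^sub>m p p) * dsum A0 B = four_block_mat (D * A0) (E * B) (adj E * A0) (0\<^sub>m p p)"
    unfolding H using A0 B D E by (simp add: mult_fb[where a=n and b=n and c=p and d=p and e=n and f=p] carrier_matD)
  have 3: "B * adj E + adj E * A0 = 0\<^sub>m p n"
  proof -
    have "adj (A0 * E + E * B) = adj E * A0 + B * adj E"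
      using A0 B E by (simp add: adj_add[of _ n p] adj_mult[of _ n n _ p] adj_mult[of _ n p _ p])
    also have "\<dots> = B * adj E + adj E * A0" using A0 B E by (intro comm_add_mat[of _ p n]) auto
    finally show ?thesis using AE by simp
  qed
  have "four_block_mat (A0 * D) (A0 * E) (B * adj E) (0\<^sub>m p p) + four_block_mat (D * A0) (E * B) (adj E * A0) (0\<^sub>m p p)
    = four_block_mat (A0 * D + D * A0) (A0 * E + E * B) (B * adj E + adj E * A0) (0\<^sub>m p p + 0\<^sub>m p p)"
    by (rule add_fb[where a=n and b=n and c=p and d=p]) (use A0 B D E in auto)
  then show ?thesis unfolding 1 2 AD AE 3 by simp
qed

lemma conj_block: assumes W: "W \<in> carrier_mat n n" and P: "P \<in> carrier_mat n n" and Q: "Q \<in> carrier_mat n p"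
  and R: "R \<in> carrier_mat p n" and S: "S \<in> carrier_mat p p"
  shows "dsum W (1\<^sub>m p) * four_block_mat P Q R S * adj (dsum W (1\<^sub>m p)) = four_block_mat (W * P * adj W) (W * Q) (R * adj W) S"
proof -
  have G: "dsum W (1\<^sub>m p) = four_block_mat W (0\<^sub>m n p) (0\<^sub>m p n) (1\<^sub>m p)" using dsum_fb W by simp
  have Ga: "adj (dsum W (1\<^sub>m p)) = four_block_mat (adj W) (0\<^sub>m n p) (0\<^sub>m p n) (1\<^sub>m p)"
    unfolding G using W by (simp add: adj_fb[where a=n and b=n and c=p and d=p])
  have "dsum W (1\<^sub>m p) * four_block_mat P Q R S = four_block_mat (W * P) (W * Q) R S"
    unfolding G using W P Q R S by (simp add: mult_fb[where a=n and b=n and c=p and d=p and e=n and f=p] carrier_matD)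
  moreover have "four_block_mat (W * P) (W * Q) R S * four_block_mat (adj W) (0\<^sub>m n p) (0\<^sub>m p n) (1\<^sub>m p)
     = four_block_mat (W * P * adj W) (W * Q) (R * adj W) S"
    using W P Q R S by (simp add: mult_fb[where a=n and b=n and c=p and d=p and e=n and f=p] carrier_matD)
  ultimately show ?thesis unfolding Ga by simp
qed


definition Zm :: "nat \<Rightarrow> complex mat" where
  "Zm m = four_block_mat (1\<^sub>m m) (0\<^sub>m m m) (0\<^sub>m m m) (- 1\<^sub>m m)"
definition Zp :: "nat \<Rightarrow> complex mat" where
  "Zp m = four_block_mat (0\<^sub>m m m) (1\<^sub>m m) (1\<^sub>m m) (0\<^sub>m m m)"
definition Dm :: "nat \<Rightarrow> complex mat" where
  "Dm m = four_block_mat (0\<^sub>m 2 2) (0\<^sub>m 2 (m+m)) (0\<^sub>m (m+m) 2) (Zm m)"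
definition Em :: "nat \<Rightarrow> complex mat" where
  "Em m = four_block_mat (1\<^sub>m 2) (0\<^sub>m 2 0) (0\<^sub>m (m+m) 2) (0\<^sub>m (m+m) 0)"
definition A0m :: "nat \<Rightarrow> complex mat \<Rightarrow> complex mat" where
  "A0m m B = four_block_mat (- B) (0\<^sub>m 2 (m+m)) (0\<^sub>m (m+m) 2) (Zp m)"

lemma fb_carrier_iff: "four_block_mat A B C D \<in> carrier_mat r c \<longleftrightarrow> (dim_row A + dim_row D = r \<and> dim_col A + dim_col D = c)"
  unfolding carrier_mat_def mem_Collect_eq index_mat_four_block(2,3) by (rule refl)
lemma uminus_zero_mat'[simp]: "- (0\<^sub>m a b) = (0\<^sub>m a b :: complex mat)"
  by (rule eq_matI) simp_all
lemma triv_block': "dim_row A = a \<Longrightarrow> dim_col A = b \<Longrightarrow> four_block_mat A (0\<^sub>m a 0) (0\<^sub>m 0 b) (0\<^sub>m 0 0) = (A :: complex mat)"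
  by (rule eq_matI) simp_all

lemma dims_concrete[simp]: "dim_row (Zm m) = m+m" "dim_col (Zm m) = m+m" "dim_row (Zp m) = m+m" "dim_col (Zp m) = m+m"
  "dim_row (Dm m) = 2+(m+m)" "dim_col (Dm m) = 2+(m+m)" "dim_row (Em m) = 2+(m+m)" "dim_col (Em m) = 2"
  unfolding Zm_def Zp_def Dm_def Em_def by simp_all

lemma Zm_c[simp]: "Zm m \<in> carrier_mat (m+m) (m+m)" unfolding Zm_def by (simp add: fb_carrier_iff)
lemma Zp_c[simp]: "Zp m \<in> carrier_mat (m+m) (m+m)" unfolding Zp_def by (simp add: fb_carrier_iff)
lemma Dm_c[simp]: "Dm m \<in> carrier_mat (2+(m+m)) (2+(m+m))" unfolding Dm_def by (simp add: fb_carrier_iff)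
lemma Em_c[simp]: "Em m \<in> carrier_mat (2+(m+m)) 2" unfolding Em_def
  using four_block_carrier_mat[of "1\<^sub>m 2" 2 2 "0\<^sub>m (m+m) 0" "m+m" 0 "0\<^sub>m 2 0" "0\<^sub>m (m+m) 2"] by simp

lemma mtrace_one: "mtrace (1\<^sub>m m) = of_nat m" unfolding mtrace_def by simp
lemma mtrace_uminus: "A \<in> carrier_mat m m \<Longrightarrow> mtrace (- A) = - mtrace A"
  unfolding mtrace_def by (simp add: sum_negf)

lemma Zm_adj: "adj (Zm m) = Zm m" unfolding Zm_def
  by (simp add: adj_fb[where a=m and b=m and c=m and d=m] adj_uminus)
lemma Zp_adj: "adj (Zp m) = Zp m" unfolding Zp_def
  by (simp add: adj_fb[where a=m and b=m and c=m and d=m])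
lemma Zm_tr: "mtrace (Zm m) = 0" unfolding Zm_def
  by (simp add: mtrace_four_block[of _ m _ m] mtrace_one mtrace_uminus[of _ m])
lemma Zp_tr: "mtrace (Zp m) = 0" unfolding Zp_def
  by (simp add: mtrace_four_block[of _ m _ m] mtrace_one)
lemma Zm_sq: "Zm m * Zm m = 1\<^sub>m (m+m)" unfolding Zm_def
  by (simp add: mult_fb[where a=m and b=m and c=m and d=m and e=m and f=m])
lemma Zp_sq: "Zp m * Zp m = 1\<^sub>m (m+m)" unfolding Zp_def
  by (simp add: mult_fb[where a=m and b=m and c=m and d=m and e=m and f=m])
lemma Zmp: "Zp m * Zm m + Zm m * Zp m = 0\<^sub>m (m+m) (m+m)"
proof -
  have 1: "Zp m * Zm m = four_block_mat (0\<^sub>m m m) (- 1\<^sub>m m) (1\<^sub>m m) (0\<^sub>m m m)" unfolding Zm_def Zp_def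
    by (simp add: mult_fb[where a=m and b=m and c=m and d=m and e=m and f=m])
  have 2: "Zm m * Zp m = four_block_mat (0\<^sub>m m m) (1\<^sub>m m) (- 1\<^sub>m m) (0\<^sub>m m m)" unfolding Zm_def Zp_def
    by (simp add: mult_fb[where a=m and b=m and c=m and d=m and e=m and f=m])
  show ?thesis unfolding 1 2
    by (simp add: add_fb[where a=m and b=m and c=m and d=m] uminus_r_inv_mat'[of _ m m])
qed
lemma Zp_IH: "Zp m \<in> IHerm0 (m+m)"
  by (rule IH_I) (simp_all add: Zp_adj Zp_tr Zp_sq)

lemma Dm_herm: "Dm m \<in> Herm (2+(m+m))"
  unfolding Herm_def using Zm_adj[of m] by (simp add: fb_carrier_iff Dm_def adj_fb[where a=2 and b=2 and c="m+m" and d="m+m"])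
lemma Dm_tr: "mtrace (Dm m) = 0"
  unfolding Dm_def by (simp add: mtrace_four_block[of _ 2 _ "m+m"] Zm_tr)
lemma Em_adj: "adj (Em m) = four_block_mat (1\<^sub>m 2) (0\<^sub>m 2 (m+m)) (0\<^sub>m 0 2) (0\<^sub>m 0 (m+m))"
  unfolding Em_def by (simp add: adj_fb[where a=2 and b=2 and c=0 and d="m+m"])
lemma Dm_Em1: "Dm m * Dm m + Em m * adj (Em m) = 1\<^sub>m (2+(m+m))"
proof -
  have 1: "Dm m * Dm m = four_block_mat (0\<^sub>m 2 2) (0\<^sub>m 2 (m+m)) (0\<^sub>m (m+m) 2) (1\<^sub>m (m+m))"
    unfolding Dm_def by (simp add: mult_fb[where a=2 and b=2 and c="m+m" and d="m+m" and e=2 and f="m+m"] Zm_sq)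
  have 2: "Em m * adj (Em m) = four_block_mat (1\<^sub>m 2) (0\<^sub>m 2 (m+m)) (0\<^sub>m (m+m) 2) (0\<^sub>m (m+m) (m+m))"
    unfolding Em_adj unfolding Em_def by (simp add: mult_fb[where a=2 and b=2 and c=0 and d="m+m" and e=2 and f="m+m"])
  show ?thesis unfolding 1 2 by (simp add: add_fb[where a=2 and b=2 and c="m+m" and d="m+m"])
qed
lemma Dm_Em: "Dm m * Em m = 0\<^sub>m (2+(m+m)) 2"
  unfolding Dm_def Em_def by (simp add: mult_fb[where a=2 and b=2 and c="m+m" and d="m+m" and e=2 and f=0])
lemma Em_Em: "adj (Em m) * Em m = 1\<^sub>m 2"
  unfolding Em_adj unfolding Em_def by (simp add: mult_fb[where a=2 and b=2 and c="m+m" and d=0 and e=2 and f=0] triv_block')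

lemma X0m_IH: "four_block_mat (Dm m) (Em m) (adj (Em m)) (0\<^sub>m 2 2) \<in> IHerm0 (2+(m+m)+2)"
  by (rule X0_IH[OF Dm_herm Dm_tr Em_c Dm_Em1 Dm_Em Em_Em])

lemma A0m_IH: assumes B: "B \<in> IHerm0 2" shows "A0m m B \<in> IHerm0 (2+(m+m))"
proof -
  note b = IH_D[OF B]
  have "- B \<in> IHerm0 2" using b
    by (intro IH_I) (simp_all add: adj_uminus mtrace_uminus[of _ 2])
  hence "dsum (- B) (Zp m) \<in> IHerm0 (2+(m+m))" using dsum_IHerm0 Zp_IH by blast
  moreover have "dsum (- B) (Zp m) = A0m m B" unfolding A0m_def using b(1) by (simp add: dsum_fb[of _ 2 _ "m+m"])
  ultimately show ?thesis by simp
qed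

lemma A0m_D: assumes B: "B \<in> carrier_mat 2 2" shows "A0m m B * Dm m + Dm m * A0m m B = 0\<^sub>m (2+(m+m)) (2+(m+m))"
proof -
  have 1: "A0m m B * Dm m = four_block_mat (0\<^sub>m 2 2) (0\<^sub>m 2 (m+m)) (0\<^sub>m (m+m) 2) (Zp m * Zm m)"
    unfolding A0m_def Dm_def using B by (simp add: mult_fb[where a=2 and b=2 and c="m+m" and d="m+m" and e=2 and f="m+m"])
  have 2: "Dm m * A0m m B = four_block_mat (0\<^sub>m 2 2) (0\<^sub>m 2 (m+m)) (0\<^sub>m (m+m) 2) (Zm m * Zp m)"
    unfolding A0m_def Dm_def using B by (simp add: mult_fb[where a=2 and b=2 and c="m+m" and d="m+m" and e=2 and f="m+m"])
  have "four_block_mat (0\<^sub>m 2 2) (0\<^sub>m 2 (m+m)) (0\<^sub>m (m+m) 2) (Zp m * Zm m) + four_block_mat (0\<^sub>m 2 2) (0\<^sub>m 2 (m+m)) (0\<^sub>m (m+m) 2) (Zm m * Zp m)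
    = four_block_mat (0\<^sub>m 2 2 + 0\<^sub>m 2 2) (0\<^sub>m 2 (m+m) + 0\<^sub>m 2 (m+m)) (0\<^sub>m (m+m) 2 + 0\<^sub>m (m+m) 2) (Zp m * Zm m + Zm m * Zp m)"
    by (rule add_fb[where a=2 and b=2 and c="m+m" and d="m+m"]) auto
  then show ?thesis unfolding 1 2 Zmp by simp
qed

lemma triv_block: "B \<in> carrier_mat a b \<Longrightarrow> B = four_block_mat B (0\<^sub>m a 0) (0\<^sub>m 0 b) (0\<^sub>m 0 0)"
  by (rule eq_matI) auto

lemma A0m_E: assumes B: "B \<in> carrier_mat 2 2" shows "A0m m B * Em m + Em m * B = 0\<^sub>m (2+(m+m)) 2"
proof -
  have 1: "A0m m B * Em m = four_block_mat (- B) (0\<^sub>m 2 0) (0\<^sub>m (m+m) 2) (0\<^sub>m (m+m) 0)"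
    unfolding A0m_def Em_def using B by (simp add: mult_fb[where a=2 and b=2 and c="m+m" and d="m+m" and e=2 and f=0])
  have 2: "Em m * B = four_block_mat B (0\<^sub>m 2 0) (0\<^sub>m (m+m) 2) (0\<^sub>m (m+m) 0)"
    apply (subst triv_block[OF B])
    unfolding Em_def using B by (simp add: mult_fb[where a=2 and b=2 and c=0 and d="m+m" and e=2 and f=0])
  have "four_block_mat (- B) (0\<^sub>m 2 0) (0\<^sub>m (m+m) 2) (0\<^sub>m (m+m) 0) + four_block_mat B (0\<^sub>m 2 0) (0\<^sub>m (m+m) 2) (0\<^sub>m (m+m) 0)
    = four_block_mat (- B + B) (0\<^sub>m 2 0 + 0\<^sub>m 2 0) (0\<^sub>m (m+m) 2 + 0\<^sub>m (m+m) 2) (0\<^sub>m (m+m) 0 + 0\<^sub>m (m+m) 0)"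
    by (rule add_fb[where a=2 and b=2 and c=0 and d="m+m"]) (use B in auto)
  then show ?thesis unfolding 1 2 using B by simp
qed


lemma div_mod_q: assumes "(i::nat) < q + q"
  shows "i div q = (if i < q then 0 else 1)" "i mod q = (if i < q then i else i - q)"
proof -
  show "i div q = (if i < q then 0 else 1)"
  proof (cases "i < q")
    case False
    have "q > 0" using False assms by linarith
    moreover have "q \<le> i" using False by linarith
    moreover have "i - q < q" using False assms by linarith
    ultimately show ?thesis using le_div_geq[of q i] False by simp
  qed simp
  show "i mod q = (if i < q then i else i - q)"
  proof (cases "i < q")
    case False
    have "q \<le> i" using False by linarith
    moreover have "i - q < q" using False assms by linarith
    ultimately show ?thesis using le_mod_geq[of q i] False by simp
  qed simp
qed

lemma kron_fb: assumes B: "B \<in> carrier_mat 2 2"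
  shows "kron B (1\<^sub>m q) = four_block_mat (B $$ (0,0) \<cdot>\<^sub>m 1\<^sub>m q) (B $$ (0,1) \<cdot>\<^sub>m 1\<^sub>m q) (B $$ (1,0) \<cdot>\<^sub>m 1\<^sub>m q) (B $$ (1,1) \<cdot>\<^sub>m 1\<^sub>m q)"
proof (rule eq_matI)
  fix i j assume "i < dim_row (four_block_mat (B $$ (0,0) \<cdot>\<^sub>m 1\<^sub>m q) (B $$ (0,1) \<cdot>\<^sub>m 1\<^sub>m q) (B $$ (1,0) \<cdot>\<^sub>m 1\<^sub>m q) (B $$ (1,1) \<cdot>\<^sub>m 1\<^sub>m q))"
    "j < dim_col (four_block_mat (B $$ (0,0) \<cdot>\<^sub>m 1\<^sub>m q) (B $$ (0,1) \<cdot>\<^sub>m 1\<^sub>m q) (B $$ (1,0) \<cdot>\<^sub>m 1\<^sub>m q) (B $$ (1,1) \<cdot>\<^sub>m 1\<^sub>m q))"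
  hence i: "i < q + q" and j: "j < q + q" by simp_all
  have i2: "i < 2 * q" "j < 2 * q" using i j by simp_all
  note d = div_mod_q[OF i] div_mod_q[OF j]
  have "kron B (1\<^sub>m q) $$ (i,j) = B $$ (i div q, j div q) * 1\<^sub>m q $$ (i mod q, j mod q)"
    unfolding kron_def using B i2 by simp
  also have "\<dots> = four_block_mat (B $$ (0,0) \<cdot>\<^sub>m 1\<^sub>m q) (B $$ (0,1) \<cdot>\<^sub>m 1\<^sub>m q) (B $$ (1,0) \<cdot>\<^sub>m 1\<^sub>m q) (B $$ (1,1) \<cdot>\<^sub>m 1\<^sub>m q) $$ (i,j)"
    unfolding d using i j by (auto simp: mod_less_divisor)
  finally show "kron B (1\<^sub>m q) $$ (i,j) = four_block_mat (B $$ (0,0) \<cdot>\<^sub>m 1\<^sub>m q) (B $$ (0,1) \<cdot>\<^sub>m 1\<^sub>m q) (B $$ (1,0) \<cdot>\<^sub>m 1\<^sub>m q) (B $$ (1,1) \<cdot>\<^sub>m 1\<^sub>m q) $$ (i,j)" .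
qed (use B in \<open>simp_all add: kron_def\<close>)

definition sx :: "complex mat" where "sx = mat 2 2 (\<lambda>(i,j). if i = j then 0 else 1)"
definition sy :: "complex mat" where "sy = mat 2 2 (\<lambda>(i,j). if i = j then 0 else if i = 0 then - \<i> else \<i>)"
definition sz :: "complex mat" where "sz = mat 2 2 (\<lambda>(i,j). if i \<noteq> j then 0 else if i = 0 then 1 else -1)"

lemma less2: "(i::nat) < 2 \<Longrightarrow> i = 0 \<or> i = 1" by auto

lemma mult2_index: assumes "A \<in> carrier_mat 2 2" "B \<in> carrier_mat 2 2" "i < 2" "j < 2"
  shows "(A * B) $$ (i,j) = A $$ (i,0) * B $$ (0,j) + A $$ (i,1) * B $$ (1,j)"
  using assms by (simp add: scalar_prod_def numeral_2_eq_2)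

lemma pauli_IH_gen: assumes c: "S \<in> carrier_mat 2 2"
  and h: "\<And>i j. i < 2 \<Longrightarrow> j < 2 \<Longrightarrow> cnj (S $$ (j,i)) = S $$ (i,j)"
  and t: "S $$ (0,0) + S $$ (1,1) = 0"
  and u: "\<And>i j. i < 2 \<Longrightarrow> j < 2 \<Longrightarrow> S $$ (i,0) * S $$ (0,j) + S $$ (i,1) * S $$ (1,j) = (if i = j then 1 else 0)"
  shows "S \<in> IHerm0 2"
proof (rule IH_I)
  show "S \<in> carrier_mat 2 2" by fact
  show a: "adj S = S" by (rule eq_matI) (use c h in auto)
  show "mtrace S = 0" using c t by (simp add: mtrace_def numeral_2_eq_2)
  show "adj S * S = 1\<^sub>m 2" unfolding a
  proof (rule eq_matI)
    fix i j assume "i < dim_row (1\<^sub>m 2 :: complex mat)" "j < dim_col (1\<^sub>m 2 :: complex mat)"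
    hence ij: "i < 2" "j < 2" by simp_all
    show "(S * S) $$ (i,j) = 1\<^sub>m 2 $$ (i,j)" using mult2_index[OF c c ij] u[OF ij] ij by simp
  qed (use c in simp_all)
qed

lemma sx_IH: "sx \<in> IHerm0 2"
  by (rule pauli_IH_gen) (auto simp: sx_def dest!: less2)
lemma sy_IH: "sy \<in> IHerm0 2"
  by (rule pauli_IH_gen) (auto simp: sy_def dest!: less2)
lemma sz_IH: "sz \<in> IHerm0 2"
  by (rule pauli_IH_gen) (auto simp: sz_def dest!: less2)


lemma fb_eq_first: assumes A: "A \<in> carrier_mat a b" "A' \<in> carrier_mat a b"
  and D: "dim_row D = dim_row D'" "dim_col D = dim_col D'"
  and eq: "four_block_mat A B C D = four_block_mat A' B' C' D'"
  shows "A = A'"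
proof (rule eq_matI)
  fix i j assume ij: "i < dim_row A'" "j < dim_col A'"
  have "four_block_mat A B C D $$ (i,j) = four_block_mat A' B' C' D' $$ (i,j)" using eq by simp
  thus "A $$ (i,j) = A' $$ (i,j)" using ij A D by simp
qed (use A in simp_all)

lemma smult_one_l[simp]: assumes "dim_row A = n" shows "(a \<cdot>\<^sub>m 1\<^sub>m n) * A = a \<cdot>\<^sub>m (A :: complex mat)"
proof -
  have A: "A \<in> carrier_mat n (dim_col A)" using assms by (intro carrier_matI) simp_all
  have "(a \<cdot>\<^sub>m 1\<^sub>m n) * A = a \<cdot>\<^sub>m (1\<^sub>m n * A)" by (rule mult_smult_assoc_mat[OF one_carrier_mat A])
  also have "1\<^sub>m n * A = A" by (rule left_mult_one_mat[OF A])
  finally show ?thesis .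
qed
lemma smult_one_r[simp]: assumes "dim_col A = n" shows "A * (a \<cdot>\<^sub>m 1\<^sub>m n) = a \<cdot>\<^sub>m (A :: complex mat)"
proof -
  have A: "A \<in> carrier_mat (dim_row A) n" using assms by (intro carrier_matI) simp_all
  have "A * (a \<cdot>\<^sub>m 1\<^sub>m n) = a \<cdot>\<^sub>m (A * 1\<^sub>m n)" by (rule mult_smult_distrib[OF A one_carrier_mat])
  also have "A * 1\<^sub>m n = A" by (rule right_mult_one_mat[OF A])
  finally show ?thesis .
qed

lemma top_block: assumes c: "N1 \<in> carrier_mat q q" "N2 \<in> carrier_mat q q" "N3 \<in> carrier_mat q q" "N4 \<in> carrier_mat q q"
  and eq: "four_block_mat (a \<cdot>\<^sub>m 1\<^sub>m q) (b \<cdot>\<^sub>m 1\<^sub>m q) (c \<cdot>\<^sub>m 1\<^sub>m q) (d \<cdot>\<^sub>m 1\<^sub>m q) * four_block_mat N1 N2 N3 N4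
    + adj (four_block_mat N1 N2 N3 N4) * four_block_mat (a \<cdot>\<^sub>m 1\<^sub>m q) (b \<cdot>\<^sub>m 1\<^sub>m q) (c \<cdot>\<^sub>m 1\<^sub>m q) (d \<cdot>\<^sub>m 1\<^sub>m q)
    = 0\<^sub>m (q+q) (q+q)"
  shows "a \<cdot>\<^sub>m N1 + b \<cdot>\<^sub>m N3 + (a \<cdot>\<^sub>m adj N1 + c \<cdot>\<^sub>m adj N3) = 0\<^sub>m q q"
proof -
  have 1: "four_block_mat (a \<cdot>\<^sub>m 1\<^sub>m q) (b \<cdot>\<^sub>m 1\<^sub>m q) (c \<cdot>\<^sub>m 1\<^sub>m q) (d \<cdot>\<^sub>m 1\<^sub>m q) * four_block_mat N1 N2 N3 N4
    = four_block_mat (a \<cdot>\<^sub>m N1 + b \<cdot>\<^sub>m N3) (a \<cdot>\<^sub>m N2 + b \<cdot>\<^sub>m N4) (c \<cdot>\<^sub>m N1 + d \<cdot>\<^sub>m N3) (c \<cdot>\<^sub>m N2 + d \<cdot>\<^sub>m N4)"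
    using c by (simp add: mult_fb[where a=q and b=q and c=q and d=q and e=q and f=q] carrier_matD)
  have 2: "adj (four_block_mat N1 N2 N3 N4) = four_block_mat (adj N1) (adj N3) (adj N2) (adj N4)"
    using c by (simp add: adj_fb[where a=q and b=q and c=q and d=q])
  have 3: "four_block_mat (adj N1) (adj N3) (adj N2) (adj N4) * four_block_mat (a \<cdot>\<^sub>m 1\<^sub>m q) (b \<cdot>\<^sub>m 1\<^sub>m q) (c \<cdot>\<^sub>m 1\<^sub>m q) (d \<cdot>\<^sub>m 1\<^sub>m q)
    = four_block_mat (a \<cdot>\<^sub>m adj N1 + c \<cdot>\<^sub>m adj N3) (b \<cdot>\<^sub>m adj N1 + d \<cdot>\<^sub>m adj N3) (a \<cdot>\<^sub>m adj N2 + c \<cdot>\<^sub>m adj N4) (b \<cdot>\<^sub>m adj N2 + d \<cdot>\<^sub>m adj N4)"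
    using c by (simp add: mult_fb[where a=q and b=q and c=q and d=q and e=q and f=q] carrier_matD)
  have 4: "four_block_mat (a \<cdot>\<^sub>m N1 + b \<cdot>\<^sub>m N3) (a \<cdot>\<^sub>m N2 + b \<cdot>\<^sub>m N4) (c \<cdot>\<^sub>m N1 + d \<cdot>\<^sub>m N3) (c \<cdot>\<^sub>m N2 + d \<cdot>\<^sub>m N4)
    + four_block_mat (a \<cdot>\<^sub>m adj N1 + c \<cdot>\<^sub>m adj N3) (b \<cdot>\<^sub>m adj N1 + d \<cdot>\<^sub>m adj N3) (a \<cdot>\<^sub>m adj N2 + c \<cdot>\<^sub>m adj N4) (b \<cdot>\<^sub>m adj N2 + d \<cdot>\<^sub>m adj N4)
    = four_block_mat (a \<cdot>\<^sub>m N1 + b \<cdot>\<^sub>m N3 + (a \<cdot>\<^sub>m adj N1 + c \<cdot>\<^sub>m adj N3)) (a \<cdot>\<^sub>m N2 + b \<cdot>\<^sub>m N4 + (b \<cdot>\<^sub>m adj N1 + d \<cdot>\<^sub>m adj N3))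
       (c \<cdot>\<^sub>m N1 + d \<cdot>\<^sub>m N3 + (a \<cdot>\<^sub>m adj N2 + c \<cdot>\<^sub>m adj N4)) (c \<cdot>\<^sub>m N2 + d \<cdot>\<^sub>m N4 + (b \<cdot>\<^sub>m adj N2 + d \<cdot>\<^sub>m adj N4))"
    by (rule add_fb[where a=q and b=q and c=q and d=q]) (use c in auto)
  have "four_block_mat (a \<cdot>\<^sub>m N1 + b \<cdot>\<^sub>m N3 + (a \<cdot>\<^sub>m adj N1 + c \<cdot>\<^sub>m adj N3)) (a \<cdot>\<^sub>m N2 + b \<cdot>\<^sub>m N4 + (b \<cdot>\<^sub>m adj N1 + d \<cdot>\<^sub>m adj N3))
       (c \<cdot>\<^sub>m N1 + d \<cdot>\<^sub>m N3 + (a \<cdot>\<^sub>m adj N2 + c \<cdot>\<^sub>m adj N4)) (c \<cdot>\<^sub>m N2 + d \<cdot>\<^sub>m N4 + (b \<cdot>\<^sub>m adj N2 + d \<cdot>\<^sub>m adj N4))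
     = four_block_mat (0\<^sub>m q q) (0\<^sub>m q q) (0\<^sub>m q q) (0\<^sub>m q q)"
    using eq unfolding 1 2 3 4 by simp
  from fb_eq_first[where a=q and b=q, OF _ _ _ _ this] show ?thesis using c by simp
qed

lemma unit_block: assumes c: "N1 \<in> carrier_mat q q" "N2 \<in> carrier_mat q q" "N3 \<in> carrier_mat q q" "N4 \<in> carrier_mat q q"
  and eq: "adj (four_block_mat N1 N2 N3 N4) * four_block_mat N1 N2 N3 N4 = 1\<^sub>m (q+q)"
  shows "adj N1 * N1 + adj N3 * N3 = 1\<^sub>m q"
proof -
  have 2: "adj (four_block_mat N1 N2 N3 N4) = four_block_mat (adj N1) (adj N3) (adj N2) (adj N4)"
    using c by (simp add: adj_fb[where a=q and b=q and c=q and d=q])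
  have be: "four_block_mat (adj N1 * N1 + adj N3 * N3) (adj N1 * N2 + adj N3 * N4) (adj N2 * N1 + adj N4 * N3) (adj N2 * N2 + adj N4 * N4)
     = four_block_mat (1\<^sub>m q) (0\<^sub>m q q) (0\<^sub>m q q) (1\<^sub>m q)"
    using eq unfolding 2 using c by (simp add: mult_fb[where a=q and b=q and c=q and d=q and e=q and f=q])
  have N3c: "adj N3 * N3 \<in> carrier_mat q q" using c by (metis adj_carrier mult_carrier_mat)
  show ?thesis by (rule fb_eq_first[where a=q and b=q, OF _ _ _ _ be]) (use c N3c in simp_all)
qed

lemma pextract:
  fixes N :: "complex mat"
  assumes N: "N \<in> carrier_mat (q+q) (q+q)"
  and E: "\<And>B. B \<in> {sx, sy, sz} \<Longrightarrow> kron B (1\<^sub>m q) * N + adj N * kron B (1\<^sub>m q) = 0\<^sub>m (q+q) (q+q)"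
  and U: "adj N * N = 1\<^sub>m (q+q)"
  shows "\<forall>i<q. \<forall>j<q. cnj (N $$ (j,i)) = - N $$ (i,j)"
    "adj (mat q q (\<lambda>(i,j). N $$ (i,j))) * mat q q (\<lambda>(i,j). N $$ (i,j)) = 1\<^sub>m q"
proof -
  obtain N1 N2 N3 N4 where sb: "split_block N q q = (N1,N2,N3,N4)" by (cases "split_block N q q") auto
  have dN: "dim_row N = q + q" "dim_col N = q + q" using N by auto
  note S = split_block[OF sb dN]
  have sbe: "N1 = mat q q (\<lambda>ij. N $$ ij)" using sb unfolding split_block_def Let_def by simp
  have N1e: "N1 = mat q q (\<lambda>(i,j). N $$ (i,j))" unfolding sbe by (rule eq_matI) simp_all
  have sxc: "sx \<in> carrier_mat 2 2" "sy \<in> carrier_mat 2 2" "sz \<in> carrier_mat 2 2" using sx_IH sy_IH sz_IH by (auto dest: IH_D)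
  have ex: "1\<cdot>\<^sub>m N1 + 0 \<cdot>\<^sub>m N3 + (1 \<cdot>\<^sub>m adj N1 + 0 \<cdot>\<^sub>m adj N3) = 0\<^sub>m q q"
    using E[of sz] kron_fb[OF sxc(3), of q] S by (intro top_block[of N1 q N2 N3 N4 _ _ _ "-1"]) (simp_all add: sz_def)
  have ey: "0 \<cdot>\<^sub>m N1 + 1 \<cdot>\<^sub>m N3 + (0 \<cdot>\<^sub>m adj N1 + 1 \<cdot>\<^sub>m adj N3) = 0\<^sub>m q q"
    using E[of sx] kron_fb[OF sxc(1), of q] S by (intro top_block[of N1 q N2 N3 N4 _ _ _ "0"]) (simp_all add: sx_def)
  have ez: "0 \<cdot>\<^sub>m N1 + (- \<i>) \<cdot>\<^sub>m N3 + (0 \<cdot>\<^sub>m adj N1 + \<i> \<cdot>\<^sub>m adj N3) = 0\<^sub>m q q"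
    using E[of sy] kron_fb[OF sxc(2), of q] S by (intro top_block[of N1 q N2 N3 N4 _ _ _ "0"]) (simp_all add: sy_def)
  have N1a: "cnj (N1 $$ (j,i)) = - N1 $$ (i,j)" if "i < q" "j < q" for i j
    using arg_cong[OF ex, of "\<lambda>M. M $$ (i,j)"] that S by (simp add: add_eq_0_iff)
  have N30: "N3 $$ (i,j) = 0" if "i < q" "j < q" for i j
  proof -
    have 1: "N3 $$ (i,j) + cnj (N3 $$ (j,i)) = 0"
      using arg_cong[OF ey, of "\<lambda>M. M $$ (i,j)"] that S by simp
    have 2: "- \<i> * N3 $$ (i,j) + \<i> * cnj (N3 $$ (j,i)) = 0"
      using arg_cong[OF ez, of "\<lambda>M. M $$ (i,j)"] that S by simp
    from 1 have "cnj (N3 $$ (j,i)) = - N3 $$ (i,j)" by (simp add: add_eq_0_iff)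
    with 2 have "- (2 * \<i>) * N3 $$ (i,j) = 0" by (simp add: algebra_simps)
    thus ?thesis by simp
  qed
  have N3z: "N3 = 0\<^sub>m q q" by (rule eq_matI) (use S N30 in simp_all)
  have "adj N1 * N1 + adj N3 * N3 = 1\<^sub>m q" by (rule unit_block[of N1 q N2 N3 N4]) (use S U in auto)
  hence "adj N1 * N1 = 1\<^sub>m q" unfolding N3z using S by simp
  thus "adj (mat q q (\<lambda>(i,j). N $$ (i,j))) * mat q q (\<lambda>(i,j). N $$ (i,j)) = 1\<^sub>m q" unfolding N1e .
  show "\<forall>i<q. \<forall>j<q. cnj (N $$ (j,i)) = - N $$ (i,j)"
    using N1a unfolding N1e by simp
qed


lemma unit_c1'[simp]: "U \<in> Unit n \<Longrightarrow> dim_row Y = n \<Longrightarrow> adj U * (U * Y) = Y"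
  using unit_cancel1[of U n Y "dim_col Y"] carrier_matI[of Y n "dim_col Y"] by simp
lemma unit_c2'[simp]: "U \<in> Unit n \<Longrightarrow> dim_row Y = n \<Longrightarrow> U * (adj U * Y) = Y"
  using unit_cancel2[of U n Y "dim_col Y"] carrier_matI[of Y n "dim_col Y"] by simp
lemma unit_dims: "U \<in> Unit n \<Longrightarrow> dim_row U = n \<and> dim_col U = n"
  by (auto simp: Unit_def)

lemma smult_one_mat'[simp]: "(1::complex) \<cdot>\<^sub>m A = A" by (rule eq_matI) simp_all

lemma dsum_Unit: assumes W: "W \<in> Unit n" shows "dsum W (1\<^sub>m p) \<in> Unit (n + p)"
proof -
  have Wc: "W \<in> carrier_mat n n" using W unit_carrier by auto
  have G: "dsum W (1\<^sub>m p) = four_block_mat W (0\<^sub>m n p) (0\<^sub>m p n) (1\<^sub>m p)" using dsum_fb Wc by simp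
  have Ga: "adj (four_block_mat W (0\<^sub>m n p) (0\<^sub>m p n) (1\<^sub>m p)) = four_block_mat (adj W) (0\<^sub>m n p) (0\<^sub>m p n) (1\<^sub>m p)"
    using Wc by (simp add: adj_fb[where a=n and b=n and c=p and d=p])
  have "adj (dsum W (1\<^sub>m p)) * dsum W (1\<^sub>m p) = four_block_mat (adj W * W) (0\<^sub>m n p) (0\<^sub>m p n) (1\<^sub>m p)"
    unfolding G Ga using Wc by (simp add: mult_fb[where a=n and b=n and c=p and d=p and e=n and f=p] carrier_matD)
  also have "\<dots> = 1\<^sub>m (n + p)" using unit_left[OF W] by simp
  finally show ?thesis unfolding Unit_def using G Wc by simp
qed

lemma conj_anticomm: assumes G: "G \<in> Unit N" and H: "H \<in> carrier_mat N N" and X: "X \<in> carrier_mat N N"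
  and AC: "H * X + X * H = 0\<^sub>m N N"
  shows "(G * H * adj G) * (G * X * adj G) + (G * X * adj G) * (G * H * adj G) = 0\<^sub>m N N"
proof -
  have Gc: "G \<in> carrier_mat N N" using G unit_carrier by auto
  note d = carrier_matD[OF Gc] carrier_matD[OF H] carrier_matD[OF X]
  have 1: "(G * H * adj G) * (G * X * adj G) = G * (H * X) * adj G" using G d by (simp add: massoc)
  have 2: "(G * X * adj G) * (G * H * adj G) = G * (X * H) * adj G" using G d by (simp add: massoc)
  have "G * (H * X) * adj G + G * (X * H) * adj G = G * (H * X + X * H) * adj G"
    using Gc H X by (simp add: mult_add_distrib_mat[of G N N "H * X" N "X * H"] add_mult_distrib_mat[of "G * (H * X)" N N "G * (X * H)" "adj G" N])
  also have "\<dots> = 0\<^sub>m N N" unfolding AC using d by simp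
  finally show ?thesis unfolding 1 2 .
qed

lemma sandwich_eq: assumes U: "U \<in> Unit r" and V: "V \<in> Unit r" and K: "K \<in> carrier_mat r r" "adj K = K"
  and M: "M \<in> carrier_mat r r"
  and eq: "adj (U * K * V) * M + adj M * (U * K * V) = 0\<^sub>m r r"
  shows "K * (adj U * M * adj V) + adj (adj U * M * adj V) * K = 0\<^sub>m r r"
proof -
  have Uc: "U \<in> carrier_mat r r" using U unit_carrier by auto
  have Vc: "V \<in> carrier_mat r r" using V unit_carrier by auto
  note d = carrier_matD[OF Uc] carrier_matD[OF Vc] carrier_matD[OF K(1)] carrier_matD[OF M]
  define Nf where "Nf = adj U * M * adj V"
  have Nc: "Nf \<in> carrier_mat r r" unfolding Nf_def using Uc Vc M by (metis adj_carrier mult_carrier_mat)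
  note dn = carrier_matD[OF Nc]
  have Me: "M = U * (Nf * V)" unfolding Nf_def using U V d unit_left[OF V] by (simp add: massoc)
  have aN: "adj Nf = V * (adj M * U)" unfolding Nf_def
    using Uc Vc M by (simp add: adj_mult[of _ r r _ r] massoc)
  have aUKV: "adj (U * K * V) = adj V * (K * adj U)"
    using Uc Vc K by (simp add: adj_mult[of _ r r _ r] massoc)
  have aM: "adj M = adj V * (adj Nf * adj U)" unfolding Me
    using Uc Vc Nc carrier_matD[OF Uc] carrier_matD[OF Vc] carrier_matD[OF Nc] by (simp add: adj_mult[of _ r r _ r] massoc)
  define T where "T = K * Nf + adj Nf * K"
  have Tc: "T \<in> carrier_mat r r" unfolding T_def using K Nc by (metis add_carrier_mat adj_carrier mult_carrier_mat)
  have "adj (U * K * V) * M = adj V * (K * Nf * V)" unfolding aUKV Me using U d dn by (simp add: massoc)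
  moreover have "adj M * (U * K * V) = adj V * (adj Nf * K * V)" unfolding aM using U d dn by (simp add: massoc)
  ultimately have "adj V * (K * Nf * V) + adj V * (adj Nf * K * V) = 0\<^sub>m r r" using eq by simp
  moreover have "adj V * (T * V) = adj V * (K * Nf * V) + adj V * (adj Nf * K * V)"
  proof -
    have c1: "K * Nf \<in> carrier_mat r r" "adj Nf * K \<in> carrier_mat r r" using K Nc by (metis adj_carrier mult_carrier_mat)+
    have c2: "K * Nf * V \<in> carrier_mat r r" "adj Nf * K * V \<in> carrier_mat r r" using c1 Vc by (metis mult_carrier_mat)+
    have "T * V = K * Nf * V + adj Nf * K * V" unfolding T_def by (rule add_mult_distrib_mat[OF c1 Vc])
    hence "adj V * (T * V) = adj V * (K * Nf * V + adj Nf * K * V)" by simp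
    also have "\<dots> = adj V * (K * Nf * V) + adj V * (adj Nf * K * V)"
      by (rule mult_add_distrib_mat[OF adj_carrier[OF Vc] c2])
    finally show ?thesis .
  qed
  ultimately have "adj V * (T * V) = 0\<^sub>m r r" by metis
  hence "V * (adj V * (T * V)) * adj V = 0\<^sub>m r r" using Vc by simp
  moreover have "V * (adj V * (T * V)) * adj V = T"
    using V Tc d carrier_matD[OF Tc] unit_right[OF V] by (simp add: massoc)
  ultimately show ?thesis unfolding T_def Nf_def by simp
qed

lemma Nf_unit: assumes U: "U \<in> Unit r" and V: "V \<in> Unit r" and M: "M \<in> Unit r"
  shows "adj (adj U * M * adj V) * (adj U * M * adj V) = 1\<^sub>m r"
proof -
  have Uc: "U \<in> carrier_mat r r" using U unit_carrier by auto
  have Vc: "V \<in> carrier_mat r r" using V unit_carrier by auto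
  have Mc: "M \<in> carrier_mat r r" using M unit_carrier by auto
  note d = carrier_matD[OF Uc] carrier_matD[OF Vc] carrier_matD[OF Mc]
  have "adj (adj U * M * adj V) = V * (adj M * U)" using Uc Vc Mc by (simp add: adj_mult[of _ r r _ r] massoc)
  hence "adj (adj U * M * adj V) * (adj U * M * adj V) = V * (adj M * (U * (adj U * (M * adj V))))"
    using d by (simp add: massoc)
  also have "\<dots> = V * (adj M * (M * adj V))" using U d by simp
  also have "\<dots> = 1\<^sub>m r" using M V d unit_right[OF V] by (simp flip: massoc) (simp add: massoc unit_left[OF M])
  finally show ?thesis .
qed

lemma kron_zero: "kron (0\<^sub>m 2 2) (1\<^sub>m q) = 0\<^sub>m (2*q) (2*q)"
  by (rule eq_matI) (simp_all add: kron_def less_mult_imp_div_less)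

lemma kron_herm: assumes B: "B \<in> Herm 2" shows "adj (kron B (1\<^sub>m q)) = kron B (1\<^sub>m q)"
proof -
  have Bc: "B \<in> carrier_mat 2 2" and Ba: "adj B = B" using B by (auto simp: Herm_def)
  have Bh: "cnj (B $$ (j,i)) = B $$ (i,j)" if "i < 2" "j < 2" for i j
    using arg_cong[OF Ba, of "\<lambda>M. M $$ (i,j)"] that Bc by simp
  have dq: "i div q < 2" if "i < 2 * q" for i using that by (simp add: less_mult_imp_div_less)
  show ?thesis
  proof (rule eq_matI)
    fix i j assume "i < dim_row (kron B (1\<^sub>m q))" "j < dim_col (kron B (1\<^sub>m q))"
    hence ij: "i < 2 * q" "j < 2 * q" using Bc by (simp_all add: kron_def)
    hence q0: "q > 0" by (cases q) auto
    show "adj (kron B (1\<^sub>m q)) $$ (i,j) = kron B (1\<^sub>m q) $$ (i,j)"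
      using ij Bc Bh[OF dq[OF ij(1)] dq[OF ij(2)]] q0 by (auto simp: kron_def)
  qed (use Bc in \<open>simp_all add: kron_def\<close>)
qed


definition Yf :: "nat \<Rightarrow> complex mat \<Rightarrow> complex mat" where
  "Yf m W = four_block_mat (0\<^sub>m (2+(m+m)) (2+(m+m))) (W * Em m) (adj (W * Em m)) (0\<^sub>m 2 2)"

lemma Yf_Herm0: assumes W: "W \<in> carrier_mat (2+(m+m)) (2+(m+m))" shows "Yf m W \<in> Herm0 (2+(m+m)+2)"
proof -
  have WE: "W * Em m \<in> carrier_mat (2+(m+m)) 2" using W Em_c by (metis mult_carrier_mat)
  have a: "adj (Yf m W) = Yf m W" unfolding Yf_def using WE
    by (simp add: adj_fb[where a="2+(m+m)" and b="2+(m+m)" and c=2 and d=2])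
  have t: "mtrace (Yf m W) = 0" unfolding Yf_def
    using mtrace_four_block[of "0\<^sub>m (2+(m+m)) (2+(m+m))" "2+(m+m)" "0\<^sub>m 2 2" 2 "W * Em m" "adj (W * Em m)"] by simp
  have c: "Yf m W \<in> carrier_mat (2+(m+m)+2) (2+(m+m)+2)" unfolding Yf_def using WE
    by (simp add: fb_carrier_iff)
  show ?thesis using a t c by (intro H0_I) auto
qed

lemma Yf_lin: assumes X: "X \<in> carrier_mat (2+(m+m)) (2+(m+m))" and Z: "Z \<in> carrier_mat (2+(m+m)) (2+(m+m))"
  shows "Yf m (complex_of_real a \<cdot>\<^sub>m X + complex_of_real b \<cdot>\<^sub>m Z) = complex_of_real a \<cdot>\<^sub>m Yf m X + complex_of_real b \<cdot>\<^sub>m Yf m Z"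
proof -
  let ?n = "2+(m+m)"
  let ?a = "complex_of_real a" and ?b = "complex_of_real b"
  have XE: "X * Em m \<in> carrier_mat ?n 2" using X Em_c by (metis mult_carrier_mat)
  have ZE: "Z * Em m \<in> carrier_mat ?n 2" using Z Em_c by (metis mult_carrier_mat)
  have 1: "(?a \<cdot>\<^sub>m X + ?b \<cdot>\<^sub>m Z) * Em m = ?a \<cdot>\<^sub>m (X * Em m) + ?b \<cdot>\<^sub>m (Z * Em m)"
  proof -
    have "(?a \<cdot>\<^sub>m X + ?b \<cdot>\<^sub>m Z) * Em m = (?a \<cdot>\<^sub>m X) * Em m + (?b \<cdot>\<^sub>m Z) * Em m"
      by (rule add_mult_distrib_mat[of _ ?n ?n _ _ 2]) (use X Z Em_c in simp_all)
    also have "(?a \<cdot>\<^sub>m X) * Em m = ?a \<cdot>\<^sub>m (X * Em m)" by (rule mult_smult_assoc_mat[OF X Em_c])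
    also have "(?b \<cdot>\<^sub>m Z) * Em m = ?b \<cdot>\<^sub>m (Z * Em m)" by (rule mult_smult_assoc_mat[OF Z Em_c])
    finally show ?thesis .
  qed
  have 2: "adj (?a \<cdot>\<^sub>m (X * Em m) + ?b \<cdot>\<^sub>m (Z * Em m)) = ?a \<cdot>\<^sub>m adj (X * Em m) + ?b \<cdot>\<^sub>m adj (Z * Em m)"
    using XE ZE by (simp add: adj_add[of _ ?n 2] adj_smult)
  have 3: "?a \<cdot>\<^sub>m Yf m X = four_block_mat (0\<^sub>m ?n ?n) (?a \<cdot>\<^sub>m (X * Em m)) (?a \<cdot>\<^sub>m adj (X * Em m)) (0\<^sub>m 2 2)"
    unfolding Yf_def using XE by (simp add: smult_four_block_mat[of _ ?n ?n _ 2 _ 2 _])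
  have 4: "?b \<cdot>\<^sub>m Yf m Z = four_block_mat (0\<^sub>m ?n ?n) (?b \<cdot>\<^sub>m (Z * Em m)) (?b \<cdot>\<^sub>m adj (Z * Em m)) (0\<^sub>m 2 2)"
    unfolding Yf_def using ZE by (simp add: smult_four_block_mat[of _ ?n ?n _ 2 _ 2 _])
  have 5: "four_block_mat (0\<^sub>m ?n ?n) (?a \<cdot>\<^sub>m (X * Em m)) (?a \<cdot>\<^sub>m adj (X * Em m)) (0\<^sub>m 2 2)
    + four_block_mat (0\<^sub>m ?n ?n) (?b \<cdot>\<^sub>m (Z * Em m)) (?b \<cdot>\<^sub>m adj (Z * Em m)) (0\<^sub>m 2 2)
    = four_block_mat (0\<^sub>m ?n ?n + 0\<^sub>m ?n ?n) (?a \<cdot>\<^sub>m (X * Em m) + ?b \<cdot>\<^sub>m (Z * Em m))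
        (?a \<cdot>\<^sub>m adj (X * Em m) + ?b \<cdot>\<^sub>m adj (Z * Em m)) (0\<^sub>m 2 2 + 0\<^sub>m 2 2)"
    by (rule add_fb[where a="?n" and b="?n" and c=2 and d=2]) (use XE ZE in simp_all)
  show ?thesis unfolding 3 4 5 unfolding Yf_def 1 2 by simp
qed

lemma split_X: assumes W: "W \<in> carrier_mat (2+(m+m)) (2+(m+m))"
  shows "four_block_mat (W * Dm m * adj W) (W * Em m) (adj (Em m) * adj W) (0\<^sub>m 2 2) = dsum (W * Dm m * adj W) (0\<^sub>m 2 2) + Yf m W"
proof -
  let ?n = "2+(m+m)"
  have WE: "W * Em m \<in> carrier_mat ?n 2" using W Em_c by (metis mult_carrier_mat)
  have WD: "W * Dm m * adj W \<in> carrier_mat ?n ?n" using W Dm_c by (metis mult_carrier_mat adj_carrier)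
  have ae: "adj (W * Em m) = adj (Em m) * adj W" by (rule adj_mult[OF W Em_c])
  have "dsum (W * Dm m * adj W) (0\<^sub>m 2 2) + Yf m W = four_block_mat (W * Dm m * adj W) (0\<^sub>m ?n 2) (0\<^sub>m 2 ?n) (0\<^sub>m 2 2)
     + four_block_mat (0\<^sub>m ?n ?n) (W * Em m) (adj (W * Em m)) (0\<^sub>m 2 2)"
    unfolding Yf_def using dsum_fb[OF WD, of "0\<^sub>m 2 2" 2] by simp
  also have "\<dots> = four_block_mat (W * Dm m * adj W + 0\<^sub>m ?n ?n) (0\<^sub>m ?n 2 + W * Em m) (0\<^sub>m 2 ?n + adj (W * Em m)) (0\<^sub>m 2 2 + 0\<^sub>m 2 2)"
    by (rule add_fb[where a="?n" and b="?n" and c=2 and d=2]) (use WE WD in simp_all)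
  also have "\<dots> = four_block_mat (W * Dm m * adj W) (W * Em m) (adj (Em m) * adj W) (0\<^sub>m 2 2)"
    unfolding ae[symmetric] using WE WD by simp
  finally show ?thesis by simp
qed

lemma sandwich_lin: fixes U' P Q V' :: "complex mat" assumes U: "U' \<in> carrier_mat r s" and P: "P \<in> carrier_mat s s" and Q: "Q \<in> carrier_mat s s" and V: "V' \<in> carrier_mat s t"
  shows "U' * (a \<cdot>\<^sub>m P + b \<cdot>\<^sub>m Q) * V' = a \<cdot>\<^sub>m (U' * P * V') + b \<cdot>\<^sub>m (U' * Q * V')"
proof -
  have "U' * (a \<cdot>\<^sub>m P + b \<cdot>\<^sub>m Q) = U' * (a \<cdot>\<^sub>m P) + U' * (b \<cdot>\<^sub>m Q)"
    by (rule mult_add_distrib_mat[of _ r s _ s]) (use U P Q in simp_all)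
  also have "\<dots> = a \<cdot>\<^sub>m (U' * P) + b \<cdot>\<^sub>m (U' * Q)" using mult_smult_distrib[OF U P] mult_smult_distrib[OF U Q] by simp
  finally have 1: "U' * (a \<cdot>\<^sub>m P + b \<cdot>\<^sub>m Q) = a \<cdot>\<^sub>m (U' * P) + b \<cdot>\<^sub>m (U' * Q)" .
  have UP: "U' * P \<in> carrier_mat r s" "U' * Q \<in> carrier_mat r s" using U P Q by (metis mult_carrier_mat)+
  have "(a \<cdot>\<^sub>m (U' * P) + b \<cdot>\<^sub>m (U' * Q)) * V' = (a \<cdot>\<^sub>m (U' * P)) * V' + (b \<cdot>\<^sub>m (U' * Q)) * V'"
    by (rule add_mult_distrib_mat[of _ r s _ _ t]) (use UP V in simp_all)
  also have "\<dots> = a \<cdot>\<^sub>m (U' * P * V') + b \<cdot>\<^sub>m (U' * Q * V')"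
    using mult_smult_assoc_mat[OF UP(1) V] mult_smult_assoc_mat[OF UP(2) V] by simp
  finally show ?thesis unfolding 1 .
qed


lemma alg_lin: "(\<i> * (complex_of_real a * x + complex_of_real b * z) + cnj (\<i> * (complex_of_real a * x' + complex_of_real b * z'))) / 2
  = complex_of_real a * ((\<i> * x + cnj (\<i> * x')) / 2) + complex_of_real b * ((\<i> * z + cnj (\<i> * z')) / 2)"
  by (simp add: field_simps)

theorem lemma3p10:
  fixes k q :: nat and \<phi> :: "complex mat \<Rightarrow> complex mat"
  assumes "k \<ge> 2"
    and "\<forall>X\<in>Herm0 (2*k). \<phi> X \<in> Mn (2*q)"
    and "real_linear_on (Herm0 (2*k)) \<phi>"
    and "\<phi> ` IHerm0 (2*k) \<subseteq> Unit (2*q)"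
    and "\<exists>U\<in>Unit (2*q). \<exists>V\<in>Unit (2*q). \<forall>A\<in>Herm0 (2*(k-1)). \<forall>B\<in>Herm0 2.
           \<phi> (dsum A B) = U * kron B (1\<^sub>m q) * V"
  shows "\<exists>\<psi> :: complex mat \<Rightarrow> complex mat.
           (\<forall>X\<in>Mn (2*(k-1)). \<psi> X \<in> Herm q) \<and>
           real_linear_on (Mn (2*(k-1))) \<psi> \<and>
           \<psi> ` Unit (2*(k-1)) \<subseteq> Herm q \<inter> Unit q"
proof -
  define m where "m = k - 2"
  have e1: "2*(k-1) = 2+(m+m)" using assms(1) unfolding m_def by simp
  have e2: "2*k = 2+(m+m)+2" using assms(1) unfolding m_def by simp
  have A2: "\<And>X. X \<in> Herm0 (2+(m+m)+2) \<Longrightarrow> \<phi> X \<in> carrier_mat (2*q) (2*q)" using assms(2) unfolding e2 by blast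
  have A3: "real_linear_on (Herm0 (2+(m+m)+2)) \<phi>" using assms(3) unfolding e2 .
  have A4: "\<And>X. X \<in> IHerm0 (2+(m+m)+2) \<Longrightarrow> \<phi> X \<in> Unit (2*q)" using assms(4) unfolding e2 by blast
  obtain U V where U: "U \<in> Unit (2*q)" and V: "V \<in> Unit (2*q)"
    and H: "\<And>A B. A \<in> Herm0 (2+(m+m)) \<Longrightarrow> B \<in> Herm0 2 \<Longrightarrow> \<phi> (dsum A B) = U * kron B (1\<^sub>m q) * V"
    using assms(5) unfolding e1 by blast
  have Uc: "U \<in> carrier_mat (2*q) (2*q)" using U unit_carrier by auto
  have Vc: "V \<in> carrier_mat (2*q) (2*q)" using V unit_carrier by auto
  define Nf where "Nf W = adj U * \<phi> (Yf m W) * adj V" for W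
  define \<psi> where "\<psi> W = mat q q (\<lambda>(i,j). (\<i> * Nf W $$ (i,j) + cnj (\<i> * Nf W $$ (j,i))) / 2)" for W
  have Nfc: "Nf W \<in> carrier_mat (2*q) (2*q)" if "W \<in> carrier_mat (2+(m+m)) (2+(m+m))" for W
  proof -
    have "\<phi> (Yf m W) \<in> carrier_mat (2*q) (2*q)" using A2 Yf_Herm0[OF that] by blast
    thus ?thesis unfolding Nf_def using Uc Vc by (metis adj_carrier mult_carrier_mat)
  qed
  have herm: "\<psi> W \<in> Herm q" for W
  proof -
    have "adj (\<psi> W) = \<psi> W"
      by (rule eq_matI) (simp_all add: \<psi>_def ac_simps)
    thus ?thesis unfolding Herm_def by (simp add: \<psi>_def)
  qed
  have lin: "real_linear_on (Mn (2+(m+m))) \<psi>"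
    unfolding real_linear_on_def
  proof (intro ballI allI)
    fix X Z :: "complex mat" and a b :: real
    assume X: "X \<in> carrier_mat (2+(m+m)) (2+(m+m))" and Z: "Z \<in> carrier_mat (2+(m+m)) (2+(m+m))"
    let ?a = "complex_of_real a" and ?b = "complex_of_real b"
    have YX: "Yf m X \<in> Herm0 (2+(m+m)+2)" and YZ: "Yf m Z \<in> Herm0 (2+(m+m)+2)" using Yf_Herm0 X Z by blast+
    have PX: "\<phi> (Yf m X) \<in> carrier_mat (2*q) (2*q)" and PZ: "\<phi> (Yf m Z) \<in> carrier_mat (2*q) (2*q)" using A2 YX YZ by blast+
    have "\<phi> (Yf m (?a \<cdot>\<^sub>m X + ?b \<cdot>\<^sub>m Z)) = \<phi> (?a \<cdot>\<^sub>m Yf m X + ?b \<cdot>\<^sub>m Yf m Z)" using Yf_lin[OF X Z] by simp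
    also have "\<dots> = ?a \<cdot>\<^sub>m \<phi> (Yf m X) + ?b \<cdot>\<^sub>m \<phi> (Yf m Z)" using A3 YX YZ unfolding real_linear_on_def by blast
    finally have "Nf (?a \<cdot>\<^sub>m X + ?b \<cdot>\<^sub>m Z) = adj U * (?a \<cdot>\<^sub>m \<phi> (Yf m X) + ?b \<cdot>\<^sub>m \<phi> (Yf m Z)) * adj V"
      unfolding Nf_def by simp
    also have "\<dots> = ?a \<cdot>\<^sub>m Nf X + ?b \<cdot>\<^sub>m Nf Z" unfolding Nf_def
      by (rule sandwich_lin[OF adj_carrier[OF Uc] PX PZ adj_carrier[OF Vc]])
    finally have NL: "Nf (?a \<cdot>\<^sub>m X + ?b \<cdot>\<^sub>m Z) = ?a \<cdot>\<^sub>m Nf X + ?b \<cdot>\<^sub>m Nf Z" .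
    have NX: "Nf X \<in> carrier_mat (2*q) (2*q)" and NZ: "Nf Z \<in> carrier_mat (2*q) (2*q)" using Nfc X Z by blast+
    show "\<psi> (?a \<cdot>\<^sub>m X + ?b \<cdot>\<^sub>m Z) = ?a \<cdot>\<^sub>m \<psi> X + ?b \<cdot>\<^sub>m \<psi> Z"
    proof (rule eq_matI)
      fix i j assume "i < dim_row (?a \<cdot>\<^sub>m \<psi> X + ?b \<cdot>\<^sub>m \<psi> Z)" "j < dim_col (?a \<cdot>\<^sub>m \<psi> X + ?b \<cdot>\<^sub>m \<psi> Z)"
      hence ij: "i < q" "j < q" by (simp_all add: \<psi>_def)
      hence ij2: "i < 2*q" "j < 2*q" by simp_all
      show "\<psi> (?a \<cdot>\<^sub>m X + ?b \<cdot>\<^sub>m Z) $$ (i,j) = (?a \<cdot>\<^sub>m \<psi> X + ?b \<cdot>\<^sub>m \<psi> Z) $$ (i,j)"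
        unfolding \<psi>_def NL using ij ij2 NX NZ alg_lin by simp
    qed (simp_all add: \<psi>_def)
  qed
  have uni: "\<psi> W \<in> Unit q" if W: "W \<in> Unit (2+(m+m))" for W
  proof -
    let ?n = "2+(m+m)"
    have Wc: "W \<in> carrier_mat ?n ?n" using W unit_carrier by auto
    define G where "G = dsum W (1\<^sub>m 2)"
    have G: "G \<in> Unit (?n + 2)" unfolding G_def by (rule dsum_Unit[OF W])
    define X0 where "X0 = four_block_mat (Dm m) (Em m) (adj (Em m)) (0\<^sub>m 2 2)"
    have X0: "X0 \<in> IHerm0 (?n + 2)" unfolding X0_def by (rule X0m_IH)
    define XW where "XW = G * X0 * adj G"
    have XW: "XW \<in> IHerm0 (?n + 2)" unfolding XW_def by (rule conj_IHerm0[OF G X0])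
    have XWe: "XW = four_block_mat (W * Dm m * adj W) (W * Em m) (adj (Em m) * adj W) (0\<^sub>m 2 2)"
      unfolding XW_def G_def X0_def by (rule conj_block[OF Wc Dm_c Em_c adj_carrier[OF Em_c] zero_carrier_mat])
    have WDH: "W * Dm m * adj W \<in> Herm0 ?n" using conj_Herm0[OF W] Dm_herm Dm_tr unfolding Herm0_def by blast
    have Z2: "0\<^sub>m 2 2 \<in> Herm0 2" by (intro H0_I) simp_all
    have DH: "dsum (W * Dm m * adj W) (0\<^sub>m 2 2) \<in> Herm0 (?n + 2)" by (rule dsum_Herm0[OF WDH Z2])
    have YH: "Yf m W \<in> Herm0 (?n + 2)" by (rule Yf_Herm0[OF Wc])
    have phD: "\<phi> (dsum (W * Dm m * adj W) (0\<^sub>m 2 2)) = 0\<^sub>m (2*q) (2*q)"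
      using H[OF WDH Z2] Uc Vc by (simp add: kron_zero)
    have "\<phi> XW = \<phi> (complex_of_real 1 \<cdot>\<^sub>m dsum (W * Dm m * adj W) (0\<^sub>m 2 2) + complex_of_real 1 \<cdot>\<^sub>m Yf m W)"
      using XWe split_X[OF Wc] by simp
    also have "\<dots> = complex_of_real 1 \<cdot>\<^sub>m \<phi> (dsum (W * Dm m * adj W) (0\<^sub>m 2 2)) + complex_of_real 1 \<cdot>\<^sub>m \<phi> (Yf m W)"
      using A3 DH YH unfolding real_linear_on_def by blast
    also have "\<dots> = \<phi> (Yf m W)" unfolding phD using A2[OF YH] by simp
    finally have phX: "\<phi> XW = \<phi> (Yf m W)" .
    define M where "M = \<phi> (Yf m W)"
    have M: "M \<in> Unit (2*q)" using A4[OF XW] phX unfolding M_def by simp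
    have Mc: "M \<in> carrier_mat (2*q) (2*q)" using M unit_carrier by auto
    have Nfe: "Nf W = adj U * M * adj V" unfolding Nf_def M_def ..
    have EQ: "kron B (1\<^sub>m q) * Nf W + adj (Nf W) * kron B (1\<^sub>m q) = 0\<^sub>m (2*q) (2*q)" if B: "B \<in> IHerm0 2" for B
    proof -
      note b = IH_D[OF B]
      have BH: "B \<in> Herm0 2" using b by (intro H0_I) auto
      define A0 where "A0 = A0m m B"
      have A0: "A0 \<in> IHerm0 ?n" unfolding A0_def by (rule A0m_IH[OF B])
      note a0 = IH_D[OF A0]
      define H0 where "H0 = dsum A0 B"
      have H0: "H0 \<in> IHerm0 (?n + 2)" unfolding H0_def by (rule dsum_IHerm0[OF A0 B])
      have AC0: "H0 * X0 + X0 * H0 = 0\<^sub>m (?n + 2) (?n + 2)" unfolding H0_def X0_def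
        by (rule anticomm_block[OF a0(1) a0(2) b(1) b(2) Dm_c Em_c]) (simp_all add: A0_def A0m_D[OF b(1)] A0m_E[OF b(1)])
      define HW where "HW = G * H0 * adj G"
      have HW: "HW \<in> IHerm0 (?n + 2)" unfolding HW_def by (rule conj_IHerm0[OF G H0])
      have ACW: "HW * XW + XW * HW = 0\<^sub>m (?n + 2) (?n + 2)" unfolding HW_def XW_def
        by (rule conj_anticomm[OF G IH_D(1)[OF H0] IH_D(1)[OF X0] AC0])
      have S: "c2 \<cdot>\<^sub>m HW + c2 \<cdot>\<^sub>m XW \<in> IHerm0 (?n + 2)" by (rule half_sum_IH[OF HW XW ACW])
      have phS: "\<phi> (c2 \<cdot>\<^sub>m HW + c2 \<cdot>\<^sub>m XW) = c2 \<cdot>\<^sub>m \<phi> HW + c2 \<cdot>\<^sub>m \<phi> XW"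
        using A3 HW XW unfolding real_linear_on_def c2_def IHerm0_def by blast
      have HWe: "HW = dsum (W * A0 * adj W) B"
      proof -
        have "HW = four_block_mat (W * A0 * adj W) (W * 0\<^sub>m ?n 2) (0\<^sub>m 2 ?n * adj W) B"
          unfolding HW_def G_def H0_def dsum_fb[OF a0(1) b(1)]
          by (rule conj_block[OF Wc a0(1) zero_carrier_mat zero_carrier_mat b(1)])
        also have "\<dots> = dsum (W * A0 * adj W) B"
        proof -
          have WAc: "W * A0 * adj W \<in> carrier_mat ?n ?n" using Wc a0(1) by (metis adj_carrier mult_carrier_mat)
          have z1: "W * 0\<^sub>m ?n 2 = 0\<^sub>m ?n 2" by (rule right_mult_zero_mat[OF Wc])
          have z2: "0\<^sub>m 2 ?n * adj W = 0\<^sub>m 2 ?n" by (rule left_mult_zero_mat[OF adj_carrier[OF Wc]])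
          show ?thesis unfolding z1 z2 dsum_fb[OF WAc b(1)] ..
        qed
        finally show ?thesis .
      qed
      have WAH: "W * A0 * adj W \<in> Herm0 ?n" using conj_Herm0[OF W] A0 unfolding IHerm0_def by blast
      define P where "P = U * kron B (1\<^sub>m q) * V"
      have phH: "\<phi> HW = P" unfolding HWe P_def by (rule H[OF WAH BH])
      have P: "P \<in> Unit (2*q)" using A4[OF HW] phH by simp
      have "c2 \<cdot>\<^sub>m P + c2 \<cdot>\<^sub>m M \<in> Unit (2*q)" using A4[OF S] phS phH phX unfolding M_def by simp
      hence cons: "adj P * M + adj M * P = 0\<^sub>m (2*q) (2*q)" by (rule unit_sum_cons[OF P M])
      have Kc: "kron B (1\<^sub>m q) \<in> carrier_mat (2*q) (2*q)" unfolding kron_def using b(1) by (intro carrier_matI) simp_all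
      have Ka: "adj (kron B (1\<^sub>m q)) = kron B (1\<^sub>m q)" by (rule kron_herm) (use BH in \<open>simp add: Herm0_def\<close>)
      show ?thesis unfolding Nfe by (rule sandwich_eq[OF U V Kc Ka Mc]) (use cons in \<open>simp add: P_def\<close>)
    qed
    have NU: "adj (Nf W) * Nf W = 1\<^sub>m (2*q)" unfolding Nfe by (rule Nf_unit[OF U V M])
    have NWc: "Nf W \<in> carrier_mat (q+q) (q+q)" using Nfc[OF Wc] by (simp add: mult_2)
    have PE: "\<And>B. B \<in> {sx, sy, sz} \<Longrightarrow> kron B (1\<^sub>m q) * Nf W + adj (Nf W) * kron B (1\<^sub>m q) = 0\<^sub>m (q+q) (q+q)"
      using EQ sx_IH sy_IH sz_IH by (auto simp: mult_2)
    have ex1: "\<forall>i<q. \<forall>j<q. cnj (Nf W $$ (j,i)) = - Nf W $$ (i,j)" using pextract(1)[OF NWc PE] NU by (simp add: mult_2)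
    have ex2: "adj (mat q q (\<lambda>(i,j). Nf W $$ (i,j))) * mat q q (\<lambda>(i,j). Nf W $$ (i,j)) = 1\<^sub>m q"
      using pextract(2)[OF NWc PE] NU by (simp add: mult_2)
    define N1 where "N1 = mat q q (\<lambda>(i,j). Nf W $$ (i,j))"
    have pe: "\<psi> W = \<i> \<cdot>\<^sub>m N1"
    proof (rule eq_matI)
      fix i j assume "i < dim_row (\<i> \<cdot>\<^sub>m N1)" "j < dim_col (\<i> \<cdot>\<^sub>m N1)"
      hence ij: "i < q" "j < q" by (simp_all add: N1_def)
      show "\<psi> W $$ (i,j) = (\<i> \<cdot>\<^sub>m N1) $$ (i,j)" using ij ex1 by (simp add: \<psi>_def N1_def)
    qed (simp_all add: \<psi>_def N1_def)
    have "adj (\<psi> W) * \<psi> W = 1\<^sub>m q"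
    proof -
      have N1c: "N1 \<in> carrier_mat q q" unfolding N1_def by simp
      have "adj (\<psi> W) * \<psi> W = (- \<i> \<cdot>\<^sub>m adj N1) * (\<i> \<cdot>\<^sub>m N1)" unfolding pe by (simp add: adj_smult)
      also have "\<dots> = (- \<i>) \<cdot>\<^sub>m (adj N1 * (\<i> \<cdot>\<^sub>m N1))" by (rule mult_smult_assoc_mat[OF adj_carrier[OF N1c] smult_carrier_mat[OF N1c]])
      also have "adj N1 * (\<i> \<cdot>\<^sub>m N1) = \<i> \<cdot>\<^sub>m (adj N1 * N1)" by (rule mult_smult_distrib[OF adj_carrier[OF N1c] N1c])
      also have "adj N1 * N1 = 1\<^sub>m q" using ex2 unfolding N1_def .
      finally show ?thesis by (simp add: smult_smult_mat)
    qed
    thus ?thesis using herm[of W] unfolding Unit_def Herm_def by simp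
  qed
  show ?thesis unfolding e1
    by (rule exI[of _ \<psi>]) (use herm lin uni in blast)
qed

end
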